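(* Let $\alpha\in\mathbb{R}$ be transcendental over $\mathbb{Q}$ and let $K=\mathbb{Q}(\alpha)$. Identify each element of $K$ with the unique rational function $r\in\mathbb{Q}(x)$ such that the element equals $r(\alpha)$, and let $K^+$ be the set of those $r$ with $r(\alpha)>0$. Define $H_+=\{r\in K^+ : r'(\alpha)>0\}$, $H_0=\{r\in K^+ : r'(\alpha)=0\}$, $H_-=\{r\in K^+ : r'(\alpha)<0\}$, where $r'$ is the (formal) derivative of $r$. Then $H_+$, $H_0$, $H_-$ are pairwise disjoint, nonempty, each closed under addition and multiplication, and $K^+=H_+\sqcup H_0\sqcup H_-$. *)

theory Defs
  imports "HOL-Computational_Algebra.Computational_Algebra"
begin

text \<open>Rational functions Q(x) are modelled as the fraction field of Q[x]:
  the type rat poly fract.  rf_rep picks some representation p/q, q nonzero.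
  Evaluation at a transcendental point and the formal derivative do not
  depend on the choice of representative.\<close>

definition rf_rep :: "rat poly fract \<Rightarrow> rat poly \<times> rat poly" where
  "rf_rep r = (SOME pq. snd pq \<noteq> 0 \<and> r = Fract (fst pq) (snd pq))"

definition rf_eval :: "real \<Rightarrow> rat poly fract \<Rightarrow> real" where
  "rf_eval a r = (case rf_rep r of (p, q) \<Rightarrow>
      poly (map_poly of_rat p) a / poly (map_poly of_rat q) a)"

definition rf_deriv :: "rat poly fract \<Rightarrow> rat poly fract" where
  "rf_deriv r = (case rf_rep r of (p, q) \<Rightarrow>
      Fract (pderiv p * q - p * pderiv q) (q * q))"

definition Kpos :: "real \<Rightarrow> rat poly fract set" where
  "Kpos a = {r. rf_eval a r > 0}"

definition Hplus :: "real \<Rightarrow> rat poly fract set" where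
  "Hplus a = {r \<in> Kpos a. rf_eval a (rf_deriv r) > 0}"

definition Hzero :: "real \<Rightarrow> rat poly fract set" where
  "Hzero a = {r \<in> Kpos a. rf_eval a (rf_deriv r) = 0}"

definition Hminus :: "real \<Rightarrow> rat poly fract set" where
  "Hminus a = {r \<in> Kpos a. rf_eval a (rf_deriv r) < 0}"

definition add_mult_closed :: "rat poly fract set \<Rightarrow> bool" where
  "add_mult_closed S \<longleftrightarrow> (\<forall>r\<in>S. \<forall>s\<in>S. r + s \<in> S \<and> r * s \<in> S)"

end

theory Submission
  imports Defs
begin

definition ev :: "real \<Rightarrow> rat poly \<Rightarrow> real" where
  "ev a p = poly (map_poly of_rat p) a"

lemma mp_add: "map_poly (of_rat :: rat \<Rightarrow> real) (p + q) = map_poly of_rat p + map_poly of_rat q"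
  by (rule poly_eqI) (simp add: coeff_map_poly of_rat_add)

lemma mp_diff: "map_poly (of_rat :: rat \<Rightarrow> real) (p - q) = map_poly of_rat p - map_poly of_rat q"
  by (rule poly_eqI) (simp add: coeff_map_poly of_rat_diff)

lemma mp_mult: "map_poly (of_rat :: rat \<Rightarrow> real) (p * q) = map_poly of_rat p * map_poly of_rat q"
  by (rule poly_eqI) (simp add: coeff_map_poly coeff_mult of_rat_sum of_rat_mult)

lemma ev_add: "ev a (p + q) = ev a p + ev a q"
  by (simp add: ev_def mp_add)
lemma ev_diff: "ev a (p - q) = ev a p - ev a q"
  by (simp add: ev_def mp_diff)
lemma ev_mult: "ev a (p * q) = ev a p * ev a q"
  by (simp add: ev_def mp_mult)

lemma ev_nz:
  assumes "\<not> algebraic a" "q \<noteq> 0"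
  shows "ev a q \<noteq> 0"
proof
  assume h: "ev a q = 0"
  have "map_poly (of_rat :: rat \<Rightarrow> real) q \<noteq> 0"
    using assms(2) by (simp add: map_poly_eq_0_iff)
  moreover have "\<forall>i. coeff (map_poly (of_rat :: rat \<Rightarrow> real) q) i \<in> \<rat>"
    by (simp add: coeff_map_poly)
  ultimately have "algebraic a" using h unfolding algebraic_altdef ev_def by blast
  with assms(1) show False by simp
qed

lemma rep_ok: "snd (rf_rep r) \<noteq> 0 \<and> r = Fract (fst (rf_rep r)) (snd (rf_rep r))"
proof -
  obtain p q where "q \<noteq> 0" "r = Fract p q" by (cases r) auto
  hence "\<exists>pq. snd pq \<noteq> 0 \<and> r = Fract (fst pq) (snd pq)" by (intro exI[of _ "(p,q)"]) auto
  thus ?thesis unfolding rf_rep_def by (rule someI_ex)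
qed

lemma rf_eval_Fract:
  assumes "\<not> algebraic a" "q \<noteq> 0"
  shows "rf_eval a (Fract p q) = ev a p / ev a q"
proof -
  obtain p' q' where pq: "rf_rep (Fract p q) = (p', q')" by (cases "rf_rep (Fract p q)")
  with rep_ok[of "Fract p q"] have q': "q' \<noteq> 0" and e: "Fract p q = Fract p' q'" by auto
  hence "p * q' = p' * q" using assms(2) by (simp add: eq_fract)
  hence "ev a p * ev a q' = ev a p' * ev a q" by (metis ev_mult)
  moreover have "ev a q \<noteq> 0" "ev a q' \<noteq> 0" using ev_nz assms q' by auto
  ultimately show ?thesis unfolding rf_eval_def pq ev_def[symmetric]
    by (simp add: field_simps)
qed

lemma rf_deriv_Fract:
  assumes "q \<noteq> 0"
  shows "rf_deriv (Fract p q) = Fract (pderiv p * q - p * pderiv q) (q * q)"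
proof -
  obtain p' q' where pq: "rf_rep (Fract p q) = (p', q')" by (cases "rf_rep (Fract p q)")
  with rep_ok[of "Fract p q"] have q': "q' \<noteq> 0" and e: "Fract p q = Fract p' q'" by auto
  hence h: "p * q' = p' * q" using assms by (simp add: eq_fract)
  have "pderiv (p * q') = pderiv (p' * q)" using h by simp
  hence h2: "p * pderiv q' + q' * pderiv p = p' * pderiv q + q * pderiv p'"
    by (simp only: pderiv_mult)
  have "(pderiv p' * q' - p' * pderiv q') * (q * q) = (pderiv p * q - p * pderiv q) * (q' * q')"
    using h h2 by algebra
  thus ?thesis unfolding rf_deriv_def pq using assms q' by (simp add: eq_fract)
qed

lemma rf_eval_add:
  assumes "\<not> algebraic a"
  shows "rf_eval a (r + s) = rf_eval a r + rf_eval a s"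
proof -
  obtain p q where r: "r = Fract p q" "q \<noteq> 0" by (cases r) auto
  obtain p2 q2 where s: "s = Fract p2 q2" "q2 \<noteq> 0" by (cases s) auto
  have "ev a q \<noteq> 0" "ev a q2 \<noteq> 0" using ev_nz assms r s by auto
  thus ?thesis using r s assms
    by (simp add: rf_eval_Fract ev_add ev_mult field_simps)
qed

lemma rf_eval_mult:
  assumes "\<not> algebraic a"
  shows "rf_eval a (r * s) = rf_eval a r * rf_eval a s"
proof -
  obtain p q where r: "r = Fract p q" "q \<noteq> 0" by (cases r) auto
  obtain p2 q2 where s: "s = Fract p2 q2" "q2 \<noteq> 0" by (cases s) auto
  have "ev a q \<noteq> 0" "ev a q2 \<noteq> 0" using ev_nz assms r s by auto
  thus ?thesis using r s assms
    by (simp add: rf_eval_Fract ev_add ev_mult field_simps)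
qed

lemma rf_deriv_add: "rf_deriv (r + s) = rf_deriv r + rf_deriv s"
proof -
  obtain p q where r: "r = Fract p q" "q \<noteq> 0" by (cases r) auto
  obtain p2 q2 where s: "s = Fract p2 q2" "q2 \<noteq> 0" by (cases s) auto
  show ?thesis using r s
    by (simp add: rf_deriv_Fract eq_fract pderiv_add pderiv_mult pderiv_diff algebra_simps)
qed

lemma rf_deriv_mult: "rf_deriv (r * s) = rf_deriv r * s + r * rf_deriv s"
proof -
  obtain p q where r: "r = Fract p q" "q \<noteq> 0" by (cases r) auto
  obtain p2 q2 where s: "s = Fract p2 q2" "q2 \<noteq> 0" by (cases s) auto
  show ?thesis using r s
    by (simp add: rf_deriv_Fract eq_fract pderiv_add pderiv_mult pderiv_diff algebra_simps)
qed

lemma ev_lin: "ev a [:c, d:] = of_rat c + of_rat d * a"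
  by (simp add: ev_def map_poly_pCons)

lemma ev_const: "ev a [:c:] = of_rat c"
  by (simp add: ev_def map_poly_pCons)

lemma ev_one [simp]: "ev a 1 = 1"
  by (simp add: ev_def)

theorem proposition2p1:
  fixes \<alpha> :: real
  assumes "\<not> algebraic \<alpha>"
  shows "Hplus \<alpha> \<inter> Hzero \<alpha> = {} \<and> Hplus \<alpha> \<inter> Hminus \<alpha> = {} \<and> Hzero \<alpha> \<inter> Hminus \<alpha> = {}
    \<and> Hplus \<alpha> \<noteq> {} \<and> Hzero \<alpha> \<noteq> {} \<and> Hminus \<alpha> \<noteq> {}
    \<and> add_mult_closed (Hplus \<alpha>) \<and> add_mult_closed (Hzero \<alpha>) \<and> add_mult_closed (Hminus \<alpha>)
    \<and> Kpos \<alpha> = Hplus \<alpha> \<union> Hzero \<alpha> \<union> Hminus \<alpha>"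
proof -
  define E where "E = rf_eval \<alpha>"
  define D where "D = (\<lambda>r. rf_eval \<alpha> (rf_deriv r))"
  have Eadd: "E (r + s) = E r + E s" for r s unfolding E_def using assms by (rule rf_eval_add)
  have Emult: "E (r * s) = E r * E s" for r s unfolding E_def using assms by (rule rf_eval_mult)
  have Dadd: "D (r + s) = D r + D s" for r s unfolding D_def using assms by (simp add: rf_deriv_add rf_eval_add)
  have Dmult: "D (r * s) = D r * E s + E r * D s" for r s
    unfolding D_def E_def using assms by (simp add: rf_deriv_mult rf_eval_add rf_eval_mult)
  have HP: "Hplus \<alpha> = {r. E r > 0 \<and> D r > 0}" unfolding Hplus_def Kpos_def E_def D_def by auto
  have H0: "Hzero \<alpha> = {r. E r > 0 \<and> D r = 0}" unfolding Hzero_def Kpos_def E_def D_def by auto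
  have HM: "Hminus \<alpha> = {r. E r > 0 \<and> D r < 0}" unfolding Hminus_def Kpos_def E_def D_def by auto
  have KP: "Kpos \<alpha> = {r. E r > 0}" unfolding Kpos_def E_def by auto
  have one: "E (Fract 1 1) = 1" "D (Fract 1 1) = 0"
    using assms by (simp_all add: E_def D_def rf_eval_Fract rf_deriv_Fract ev_def)
  define c :: rat where "c = of_int (\<lfloor>- \<alpha>\<rfloor> + 1)"
  have c: "of_rat c > - \<alpha>" unfolding c_def by (simp add: of_rat_add)
  define d :: rat where "d = of_int (\<lfloor>\<alpha>\<rfloor> + 1)"
  have d: "of_rat d > \<alpha>" unfolding d_def by (simp add: of_rat_add)
  have pl: "E (Fract [:c, 1:] 1) > 0" "D (Fract [:c, 1:] 1) > 0"
    using assms c by (simp_all add: E_def D_def rf_eval_Fract rf_deriv_Fract ev_lin ev_const pderiv_pCons)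
  have mi: "E (Fract [:d, -1:] 1) > 0" "D (Fract [:d, -1:] 1) < 0"
    using assms d by (simp_all add: E_def D_def rf_eval_Fract rf_deriv_Fract ev_lin ev_const pderiv_pCons of_rat_minus)
  have neg: "D r * E s + E r * D s < 0" if "E r > 0" "D r < 0" "E s > 0" "D s < 0" for r s
    using that by (simp add: add_neg_neg mult_neg_pos mult_pos_neg)
  have ex0: "\<exists>x. 0 < E x \<and> D x = 0" using one by (intro exI[of _ "Fract 1 1"]) simp
  show ?thesis
    unfolding HP H0 HM KP add_mult_closed_def
    using one pl mi neg ex0
    by (auto simp: Eadd Emult Dadd Dmult add_pos_pos add_neg_neg mult_pos_pos)
qed

end
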